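(* Let $\Psi:\mathbb{R}^n\to\mathbb{R}$ be convex and twice continuously differentiable, let $s:\mathbb{R}^n\to\mathbb{R}^m$ ($m\ge n$) have continuously differentiable component functions with Jacobian $J(x)\in\mathbb{R}^{m\times n}$, let $b\in\mathbb{R}^m$, $\sigma>0$, and $c(x)=\frac12\|s(x)-b\|^2-\frac{\sigma^2}{2}$, so $\nabla c(x)=J(x)^T(s(x)-b)$. Let $(x^*,\lambda^* )\in\mathbb{R}^n\times\mathbb{R}$ with $\lambda^*>0$ satisfy $$\nabla\Psi(x^* )+\lambda^*\nabla c(x^* )=0,\qquad c(x^* )=0,$$ with $\nabla c(x^* )\neq0$, and suppose the matrix $\nabla^2\Psi(x^* )+\lambda^*J(x^* )^TJ(x^* )$ is positive definite. Then there exists an open ball $\mathcal{B}_\rho(x^* )$ with center $x^*$ and radius $\rho>0$ such that for every $x\in\mathcal{B}_\rho(x^* )$ there exists $(p,\lambda)\in\mathbb{R}^n\times\mathbb{R}$ with $\lambda>0$ solving $$\nabla\Psi(x+p)+\lambda\big(\nabla c(x)+J(x)^TJ(x)p\big)=0,\qquad c(x)+\nabla c(x)^Tp+\tfrac12 p^TJ(x)^TJ(x)p=0.$$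
   Context: $\|\cdot\|$ is the Euclidean norm. The second system expresses the KKT conditions of the sub-problem $\min_p\Psi(x+p)$ subject to $\frac12\|J(x)p+s(x)-b\|^2=\frac{\sigma^2}{2}$. *)

theory Defs
  imports "HOL-Analysis.Analysis"
begin

definition pos_def_mat :: "real ^'n ^'n \<Rightarrow> bool" where
  "pos_def_mat A \<longleftrightarrow> (\<forall>x. x \<noteq> 0 \<longrightarrow> x \<bullet> (A *v x) > 0)"

definition cfun :: "('a \<Rightarrow> real ^'m) \<Rightarrow> real ^'m \<Rightarrow> real \<Rightarrow> 'a \<Rightarrow> real" where
  "cfun s b \<sigma> x = (1/2) * (norm (s x - b))^2 - \<sigma>^2 / 2"

end

theory Submission
  imports Defs
begin

lemma param_zero:
  fixes G :: "'a::euclidean_space \<times> 'b::euclidean_space \<Rightarrow> 'b"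
  assumes cont: "continuous_on UNIV G"
   and z: "G (x0,y0) = 0"
   and der: "((\<lambda>y. G (x0,y)) has_derivative A) (at y0)"
   and inj0: "\<And>h. A h = 0 \<Longrightarrow> h = 0"
   and eps: "\<epsilon> > 0"
  shows "\<exists>\<delta>>0. \<forall>x\<in>ball x0 \<delta>. \<exists>y\<in>cball y0 \<epsilon>. G (x,y) = 0"
proof -
  have bl: "bounded_linear A" using der has_derivative_bounded_linear by blast
  hence lin: "linear A" by (rule bounded_linear.linear)
  have "inj A" using inj0 lin by (metis linear_injective_0 injI inj_on_def)
  hence "surj A" using lin eucl.linear_inj_imp_surj by blast
  then obtain B where linB: "linear B" and AB: "A \<circ> B = id"
    using lin real_vector.linear_surjective_right_inverse by blast
  have BA: "B \<circ> A = id" using eucl.linear_inverse_left[OF lin linB] AB by simp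
  have AB': "\<And>z. A (B z) = z" using AB by (metis comp_apply id_apply)
  have BA': "\<And>z. B (A z) = z" using BA by (metis comp_apply id_apply)
  obtain K where K: "K > 0" "\<And>z. norm (B z) \<le> K * norm z"
    using linB linear_bounded_pos by blast
  obtain d where d: "d > 0" and dd: "\<And>y. norm (y - y0) < d \<Longrightarrow>
      norm (G (x0,y) - G (x0,y0) - A (y - y0)) \<le> (1/(2*K)) * norm (y - y0)"
    using der[unfolded has_derivative_at_alt] K(1)
    by (metis (no_types, lifting) divide_pos_pos mult_pos_pos zero_less_numeral zero_less_one)
  define r where "r = min \<epsilon> (d/2)"
  have r: "r > 0" "r \<le> \<epsilon>" "r < d" using d eps by (auto simp: r_def)
  have near: "norm (y - y0 - B (G (x0,y))) \<le> r/2" if "y \<in> cball y0 r" for y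
  proof -
    have ny: "norm (y - y0) \<le> r" using that by (simp add: dist_norm norm_minus_commute)
    have "y - y0 - B (G (x0,y)) = B (A (y - y0) - G (x0,y))"
      using linB BA' by (simp add: linear_diff)
    also have "norm \<dots> \<le> K * norm (A (y - y0) - G (x0,y))" by (rule K(2))
    also have "norm (A (y - y0) - G (x0,y)) = norm (G (x0,y) - G (x0,y0) - A (y - y0))"
      using z by (simp add: norm_minus_commute)
    also have "\<dots> \<le> (1/(2*K)) * norm (y - y0)" using dd ny r by simp
    finally have "norm (y - y0 - B (G (x0,y))) \<le> K * ((1/(2*K)) * norm (y - y0))"
      using K(1) by (simp add: mult_left_mono)
    also have "\<dots> = norm (y - y0) / 2" using K(1) by simp
    finally show ?thesis using ny by simp
  qed
  have uc: "uniformly_continuous_on (cball x0 1 \<times> cball y0 r) G"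
    by (intro compact_uniformly_continuous continuous_on_subset[OF cont])
       (auto intro: compact_Times)
  obtain e where e: "e > 0" and ee: "\<And>u v. u \<in> cball x0 1 \<times> cball y0 r \<Longrightarrow>
       v \<in> cball x0 1 \<times> cball y0 r \<Longrightarrow> dist v u < e \<Longrightarrow> dist (G v) (G u) < r/(2*K)"
    using uc[unfolded uniformly_continuous_on_def, rule_format, of "r/(2*K)"] r K(1)
    by (metis divide_pos_pos mult_pos_pos zero_less_numeral)
  define \<delta> where "\<delta> = min 1 e"
  have "\<delta> > 0" using e by (simp add: \<delta>_def)
  moreover have "\<exists>y\<in>cball y0 \<epsilon>. G (x,y) = 0" if x: "x \<in> ball x0 \<delta>" for x
  proof -
    have step: "0 + (y - B (G (x,y))) \<in> cball y0 r" if y: "y \<in> cball y0 r" for y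
    proof -
      have "dist (G (x,y)) (G (x0,y)) < r/(2*K)"
        apply (rule ee)
        using x y by (auto simp: \<delta>_def dist_Pair_Pair dist_commute)
      hence n1: "norm (G (x,y) - G (x0,y)) \<le> r/(2*K)" by (simp add: dist_norm)
      have "norm (B (G (x,y) - G (x0,y))) \<le> K * (r/(2*K))"
        using K(2)[of "G (x,y) - G (x0,y)"] n1 K(1)
        by (meson mult_left_mono order_trans less_imp_le)
      hence n2: "norm (B (G (x,y)) - B (G (x0,y))) \<le> r/2" using K(1) linB by (simp add: linear_diff)
      have "y0 - (y - B (G (x,y))) = - ((y - y0 - B (G (x0,y))) - (B (G (x,y)) - B (G (x0,y))))"
        by (simp add: algebra_simps)
      hence "norm (y0 - (y - B (G (x,y)))) \<le> norm (y - y0 - B (G (x0,y))) + norm (B (G (x,y)) - B (G (x0,y)))"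
        by (metis norm_minus_cancel norm_triangle_ineq4)
      thus ?thesis using near[OF y] n2 by (simp add: dist_norm)
    qed
    have "\<exists>y\<in>cball y0 r. B (G (x,y)) = 0"
      apply (rule brouwer_surjective_cball[where S="{0}"])
      using step r apply auto
      apply (rule continuous_on_compose2[of UNIV B])
        apply (simp add: linB linear_continuous_on linear_conv_bounded_linear[symmetric])
       apply (rule continuous_on_compose2[OF cont])
        apply (auto intro!: continuous_intros)
      done
    then obtain y where "y \<in> cball y0 r" "B (G (x,y)) = 0" by blast
    hence "G (x,y) = 0" "y \<in> cball y0 \<epsilon>" using AB'[of "G (x,y)"] linear_0[OF lin] r
      by (auto simp: dist_norm)
    thus ?thesis by blast
  qed
  ultimately show ?thesis by blast
qed

lemma cont_mv:
  fixes A :: "'a::topological_space \<Rightarrow> real^'n^'m"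
  assumes "continuous_on S A" "continuous_on S v"
  shows "continuous_on S (\<lambda>x. A x *v v x)"
  unfolding matrix_vector_mult_def by (intro continuous_intros assms)

lemma dGl:
  fixes gPsi :: "real^'n \<Rightarrow> real^'n" and M Q :: "real^'n^'n"
  assumes d2: "(gPsi has_derivative (\<lambda>h. M *v h)) (at xs)"
  shows "((\<lambda>y::(real^'n) \<times> real. (gPsi (xs + fst y) + snd y *\<^sub>R (gx + Q *v fst y),
      c + gx \<bullet> fst y + (1/2) * (fst y \<bullet> (Q *v fst y)))) has_derivative
     (\<lambda>h. (M *v fst h + lamS *\<^sub>R (Q *v fst h) + snd h *\<^sub>R gx, gx \<bullet> fst h))) (at (0, lamS))"
proof -
  have df: "((\<lambda>y::(real^'n) \<times> real. fst y) has_derivative (\<lambda>h. fst h)) (at (0, lamS))"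
    by (rule has_derivative_fst[OF has_derivative_ident])
  have ds: "((\<lambda>y::(real^'n) \<times> real. snd y) has_derivative (\<lambda>h. snd h)) (at (0, lamS))"
    by (rule has_derivative_snd[OF has_derivative_ident])
  have dx: "((\<lambda>y::(real^'n) \<times> real. xs + fst y) has_derivative (\<lambda>h. fst h)) (at (0, lamS))"
    using has_derivative_add[OF has_derivative_const df] by simp
  have dg: "((\<lambda>y::(real^'n) \<times> real. gPsi (xs + fst y)) has_derivative (\<lambda>h. M *v fst h)) (at (0, lamS))"
    using has_derivative_compose[OF dx, of gPsi] d2 by simp
  have dQ: "((\<lambda>y::(real^'n) \<times> real. Q *v fst y) has_derivative (\<lambda>h. Q *v fst h)) (at (0, lamS))"
    using has_derivative_compose[OF df bounded_linear_imp_has_derivative[OF matrix_vector_mul_bounded_linear[of Q]]]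
    by simp
  have dQ2: "((\<lambda>y::(real^'n) \<times> real. gx + Q *v fst y) has_derivative (\<lambda>h. Q *v fst h)) (at (0, lamS))"
    using has_derivative_add[OF has_derivative_const dQ] by simp
  have d2': "((\<lambda>y::(real^'n) \<times> real. snd y *\<^sub>R (gx + Q *v fst y)) has_derivative
      (\<lambda>h. lamS *\<^sub>R (Q *v fst h) + snd h *\<^sub>R gx)) (at (0, lamS))"
    using has_derivative_scaleR[OF ds dQ2] by simp
  have d1: "((\<lambda>y::(real^'n) \<times> real. gPsi (xs + fst y) + snd y *\<^sub>R (gx + Q *v fst y)) has_derivative
      (\<lambda>h. M *v fst h + lamS *\<^sub>R (Q *v fst h) + snd h *\<^sub>R gx)) (at (0, lamS))"
    using has_derivative_add[OF dg d2'] by (simp add: add.assoc)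
  have di: "((\<lambda>y::(real^'n) \<times> real. fst y \<bullet> (Q *v fst y)) has_derivative (\<lambda>h. 0)) (at (0, lamS))"
    using has_derivative_inner[OF df dQ] by simp
  have dl: "((\<lambda>y::(real^'n) \<times> real. gx \<bullet> fst y) has_derivative (\<lambda>h. gx \<bullet> fst h)) (at (0, lamS))"
    by (rule has_derivative_inner_right[OF df])
  have d3: "((\<lambda>y::(real^'n) \<times> real. c + gx \<bullet> fst y + (1/2) * (fst y \<bullet> (Q *v fst y))) has_derivative
      (\<lambda>h. gx \<bullet> fst h)) (at (0, lamS))"
    using has_derivative_add[OF has_derivative_add[OF has_derivative_const dl]
        has_derivative_mult_right[OF di, of "1/2"]] by simp
  show ?thesis by (rule has_derivative_Pair[OF d1 d3])
qed

theorem lemma3: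
  fixes \<Psi> :: "real ^'n \<Rightarrow> real"
    and gPsi :: "real ^'n \<Rightarrow> real ^'n"
    and HPsi :: "real ^'n \<Rightarrow> real ^'n ^'n"
    and s :: "real ^'n \<Rightarrow> real ^'m"
    and J :: "real ^'n \<Rightarrow> real ^'n ^'m"
    and b :: "real ^'m"
    and \<sigma> :: real
    and xs :: "real ^'n" and lamS :: real
  assumes mn: "CARD('m) \<ge> CARD('n)"
    and convex: "convex_on UNIV \<Psi>"
    and dPsi: "\<And>x. (\<Psi> has_derivative (\<lambda>h. gPsi x \<bullet> h)) (at x)"
    and d2Psi: "\<And>x. (gPsi has_derivative (\<lambda>h. HPsi x *v h)) (at x)"
    and contH: "continuous_on UNIV HPsi"
    and ds: "\<And>x. (s has_derivative (\<lambda>h. J x *v h)) (at x)"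
    and contJ: "continuous_on UNIV J"
    and sigma_pos: "\<sigma> > 0"
    and lam_pos: "lamS > 0"
    and kkt1: "gPsi xs + lamS *\<^sub>R (transpose (J xs) *v (s xs - b)) = 0"
    and kkt2: "cfun s b \<sigma> xs = 0"
    and grad_nz: "transpose (J xs) *v (s xs - b) \<noteq> 0"
    and posdef: "pos_def_mat (HPsi xs + lamS *\<^sub>R (transpose (J xs) ** J xs))"
  shows "\<exists>\<rho>>0. \<forall>x\<in>ball xs \<rho>. \<exists>p lam. lam > 0 \<and>
           gPsi (x + p) + lam *\<^sub>R (transpose (J x) *v (s x - b) + (transpose (J x) ** J x) *v p) = 0 \<and>
           cfun s b \<sigma> x + (transpose (J x) *v (s x - b)) \<bullet> p
             + (1/2) * (p \<bullet> ((transpose (J x) ** J x) *v p)) = 0"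
  proof -
  define g where "g x = transpose (J x) *v (s x - b)" for x
  define Q where "Q x = transpose (J x) ** J x" for x
  define F where "F x p l = (gPsi (x + p) + l *\<^sub>R (g x + Q x *v p),
      cfun s b \<sigma> x + g x \<bullet> p + (1/2) * (p \<bullet> (Q x *v p)))" for x p l
  define G where "G z = F (fst z) (fst (snd z)) (snd (snd z))" for z
  have cs: "continuous_on UNIV s"
    using ds by (meson continuous_at_imp_continuous_on has_derivative_continuous)
  have cg: "continuous_on UNIV gPsi"
    using d2Psi by (meson continuous_at_imp_continuous_on has_derivative_continuous)
  have cJt: "continuous_on UNIV (\<lambda>x. transpose (J x))"
    unfolding transpose_def by (intro continuous_intros contJ)
  have cgx: "continuous_on UNIV g"
    unfolding g_def matrix_vector_mult_def
    by (intro continuous_intros cJt cs)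
  have cQ: "continuous_on UNIV Q"
    unfolding Q_def matrix_matrix_mult_def
    by (intro continuous_intros cJt contJ)
  have cc: "continuous_on UNIV (cfun s b \<sigma>)"
    unfolding cfun_def[abs_def] by (intro continuous_intros cs)
  have c1: "continuous_on UNIV (\<lambda>z::(real^'n) \<times> (real^'n) \<times> real. gPsi (fst z + fst (snd z)))"
    by (rule continuous_on_compose2[OF cg]) (auto intro!: continuous_intros)
  have c2: "continuous_on UNIV (\<lambda>z::(real^'n) \<times> (real^'n) \<times> real. g (fst z))"
    by (rule continuous_on_compose2[OF cgx]) (auto intro!: continuous_intros)
  have c3: "continuous_on UNIV (\<lambda>z::(real^'n) \<times> (real^'n) \<times> real. Q (fst z))"
    by (rule continuous_on_compose2[OF cQ]) (auto intro!: continuous_intros)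
  have c4: "continuous_on UNIV (\<lambda>z::(real^'n) \<times> (real^'n) \<times> real. cfun s b \<sigma> (fst z))"
    by (rule continuous_on_compose2[OF cc]) (auto intro!: continuous_intros)
  have c5: "continuous_on UNIV (\<lambda>z::(real^'n) \<times> (real^'n) \<times> real. Q (fst z) *v fst (snd z))"
    by (rule cont_mv[OF c3]) (auto intro!: continuous_intros)
  have contG: "continuous_on UNIV G"
    unfolding G_def F_def
    by (intro continuous_intros c1 c2 c4 c5)
  have G0: "G (xs, (0, lamS)) = 0"
    using kkt1 kkt2 by (simp add: G_def F_def g_def zero_prod_def)
  define A where "A h = (HPsi xs *v fst h + lamS *\<^sub>R (Q xs *v fst h) + snd h *\<^sub>R g xs,
        g xs \<bullet> fst h)" for h :: "(real^'n) \<times> real"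
  have dG: "((\<lambda>y. G (xs, y)) has_derivative A) (at (0, lamS))"
    using dGl[OF d2Psi[of xs], where lamS=lamS and gx="g xs" and Q="Q xs" and c="cfun s b \<sigma> xs"]
    by (simp add: G_def F_def A_def[abs_def])
  have injA: "h = 0" if "A h = 0" for h
  proof -
    obtain u \<mu> where h: "h = (u, \<mu>)" by (cases h)
    have e1: "(HPsi xs + lamS *\<^sub>R Q xs) *v u + \<mu> *\<^sub>R g xs = 0" and e2: "g xs \<bullet> u = 0"
      using that by (simp_all add: A_def h zero_prod_def matrix_vector_mult_add_rdistrib
          scaleR_matrix_vector_assoc)
    have "(HPsi xs + lamS *\<^sub>R Q xs) *v u = - (\<mu> *\<^sub>R g xs)"
      using e1 by (simp add: eq_neg_iff_add_eq_0)
    hence "u \<bullet> ((HPsi xs + lamS *\<^sub>R Q xs) *v u) = - \<mu> * (u \<bullet> g xs)"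
      by simp
    also have "\<dots> = 0" using e2 by (simp add: inner_commute)
    finally have z: "u \<bullet> ((HPsi xs + lamS *\<^sub>R Q xs) *v u) = 0" .
    have pd: "\<forall>x. x \<noteq> 0 \<longrightarrow> 0 < x \<bullet> ((HPsi xs + lamS *\<^sub>R Q xs) *v x)"
      using posdef by (simp add: pos_def_mat_def Q_def)
    have u0: "u = 0" using pd z by force
    hence "\<mu> *\<^sub>R g xs = 0" using e1 by simp
    hence "\<mu> = 0" using grad_nz by (simp add: g_def)
    thus ?thesis using u0 h by (simp add: zero_prod_def)
  qed
  obtain \<delta> where \<delta>: "\<delta> > 0" and H: "\<And>x. x \<in> ball xs \<delta> \<Longrightarrow> \<exists>y\<in>cball (0, lamS) (lamS/2). G (x, y) = 0"
    using param_zero[OF contG G0 dG injA, of "lamS/2"] lam_pos by auto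
  show ?thesis
  proof (intro exI[of _ \<delta>] conjI ballI \<delta>)
    fix x assume "x \<in> ball xs \<delta>"
    then obtain p l where y: "(p, l) \<in> cball (0, lamS) (lamS/2)" and Gz: "G (x, (p, l)) = 0"
      using H by fastforce
    have "dist lamS l \<le> lamS/2" using y dist_snd_le[of "(0,lamS)" "(p,l)"] by (simp add: dist_commute)
    hence "\<bar>lamS - l\<bar> \<le> lamS/2" by (simp add: dist_real_def)
    moreover have "lamS - l \<le> \<bar>lamS - l\<bar>" by (rule abs_ge_self)
    ultimately have "l > 0" using lam_pos by linarith
    thus "\<exists>p lam. lam > 0 \<and>
           gPsi (x + p) + lam *\<^sub>R (transpose (J x) *v (s x - b) + (transpose (J x) ** J x) *v p) = 0 \<and>
           cfun s b \<sigma> x + (transpose (J x) *v (s x - b)) \<bullet> p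
             + (1/2) * (p \<bullet> ((transpose (J x) ** J x) *v p)) = 0"
      using Gz by (auto simp: G_def F_def g_def Q_def zero_prod_def)
  qed
qed

end
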